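(* Let $R$ be a commutative ring with identity, $n>1$, $S=M_n(R)$. If $A\in S$ and $c\in R$ is a nonzero element with $c\det A=0$, then there exists a nonzero matrix $C\in cS=\{cX: X\in S\}$ with $AC=CA=0$. *)

theory Defs
  imports "HOL-Analysis.Analysis"
begin

end

theory Submission
  imports Defs "Jordan_Normal_Form.Determinant"
begin
hide_const (open) Determinant.det
no_notation Matrix.vec_index (infixl "$" 100)

definition subm :: "'a::comm_ring_1^'n^'n \<Rightarrow> nat \<Rightarrow> (nat \<Rightarrow> 'n) \<Rightarrow> (nat \<Rightarrow> 'n) \<Rightarrow> 'a mat" where
  "subm A t f g = mat t t (\<lambda>(i,j). A $ f i $ g j)"

lemma subm_carrier[simp]: "subm A t f g \<in> carrier_mat t t"
  by (simp add: subm_def)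

lemma det_subm_full:
  fixes A :: "'a::comm_ring_1^'n^'n" and f :: "nat \<Rightarrow> 'n"
  assumes bij: "bij_betw f {0..<CARD('n)} UNIV"
  shows "Determinant.det (subm A CARD('n) f f) = det A"
proof -
  let ?n = "CARD('n)"
  let ?S = "{0..<?n}"
  define h where "h = map_permutation ?S f"
  have inj: "inj_on f ?S" using bij bij_betw_def by blast
  have hb: "bij_betw h {p. p permutes ?S} {q. q permutes (UNIV::'n set)}"
  proof (rule bij_betw_byWitness[where f' = "map_permutation UNIV (inv_into ?S f)"])
    show "\<forall>a\<in>{p. p permutes ?S}. map_permutation UNIV (inv_into ?S f) (h a) = a"
      unfolding h_def using map_permutation_compose_inv[OF bij] inj by (simp add: inv_into_f_f)
    show "\<forall>a'\<in>{q. q permutes (UNIV::'n set)}. h (map_permutation UNIV (inv_into ?S f) a') = a'"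
      unfolding h_def using map_permutation_compose_inv[OF bij_betw_inv_into[OF bij]] bij
      by (simp add: bij_betw_def f_inv_into_f)
    show "h ` {p. p permutes ?S} \<subseteq> {q. q permutes UNIV}"
      unfolding h_def using map_permutation_permutes[OF bij] by auto
    show "map_permutation UNIV (inv_into ?S f) ` {q. q permutes UNIV} \<subseteq> {p. p permutes ?S}"
      using map_permutation_permutes[OF bij_betw_inv_into[OF bij]] by auto
  qed
  have "det A = (\<Sum>p\<in>{p. p permutes ?S}. of_int (sign (h p)) * (\<Prod>x\<in>UNIV. A $ x $ h p x))"
    unfolding Determinants.det_def using sum.reindex_bij_betw[OF hb, of "\<lambda>q. of_int (sign q) * (\<Prod>x\<in>UNIV. A $ x $ q x)"]
    by simp
  also have "\<dots> = (\<Sum>p\<in>{p. p permutes ?S}. of_int (sign p) * (\<Prod>i\<in>?S. A $ f i $ f (p i)))"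
  proof (rule sum.cong[OF refl])
    fix p assume p: "p \<in> {p. p permutes ?S}"
    have "sign (h p) = sign p" unfolding h_def
      by (rule sign_map_permutation) (use inj p in auto)
    moreover have "(\<Prod>x\<in>UNIV. A $ x $ h p x) = (\<Prod>i\<in>?S. A $ f i $ h p (f i))"
      by (rule prod.reindex_bij_betw[OF bij, symmetric])
    moreover have "\<And>i. i \<in> ?S \<Longrightarrow> h p (f i) = f (p i)"
      unfolding h_def by (rule map_permutation_apply[OF inj])
    ultimately show "of_int (sign (h p)) * (\<Prod>x\<in>UNIV. A $ x $ h p x) = of_int (sign p) * (\<Prod>i\<in>?S. A $ f i $ f (p i))"
      by simp
  qed
  also have "\<dots> = Determinant.det (subm A ?n f f)"
    unfolding Determinant.det_def'[OF subm_carrier]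
    by (intro sum.cong refl prod.cong) (auto simp: subm_def permutes_in_image)
  finally show ?thesis by simp
qed

lemma bij_of_inj:
  fixes f :: "nat \<Rightarrow> 'n::finite"
  assumes "inj_on f {0..<CARD('n)}"
  shows "bij_betw f {0..<CARD('n)} UNIV"
proof -
  have "card (f ` {0..<CARD('n)}) = CARD('n)" using card_image[OF assms] by simp
  hence "f ` {0..<CARD('n)} = UNIV" by (simp add: card_subset_eq)
  thus ?thesis using assms by (simp add: bij_betw_def)
qed

lemma det_subm_top:
  fixes A :: "'a::comm_ring_1^'n^'n"
  assumes "c * det A = 0"
  shows "c * Determinant.det (subm A CARD('n) f g) = 0"
proof -
  let ?n = "CARD('n)"
  let ?S = "{0..<?n}"
  show ?thesis
  proof (cases "inj_on f ?S \<and> inj_on g ?S")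
    case False
    hence "\<not> inj_on f ?S \<or> \<not> inj_on g ?S" by blast
    then show ?thesis
    proof
      assume "\<not> inj_on f ?S"
      then obtain i j where ij: "i \<in> ?S" "j \<in> ?S" "i \<noteq> j" "f i = f j"
        unfolding inj_on_def by blast
      have "row (subm A ?n f g) i = row (subm A ?n f g) j"
        by (rule eq_vecI) (use ij in \<open>auto simp: subm_def\<close>)
      hence "Determinant.det (subm A ?n f g) = 0"
        by (intro det_identical_rows[OF subm_carrier, of i j]) (use ij in auto)
      thus ?thesis by simp
    next
      assume "\<not> inj_on g ?S"
      then obtain i j where ij: "i \<in> ?S" "j \<in> ?S" "i \<noteq> j" "g i = g j"
        unfolding inj_on_def by blast
      have "col (subm A ?n f g) i = col (subm A ?n f g) j"
        by (rule eq_vecI) (use ij in \<open>auto simp: subm_def\<close>)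
      hence "Determinant.det (subm A ?n f g) = 0"
        by (intro det_identical_columns[OF subm_carrier, of i j]) (use ij in auto)
      thus ?thesis by simp
    qed
  next
    case True
    have bf: "bij_betw f ?S UNIV" and bg: "bij_betw g ?S UNIV"
      using True bij_of_inj by auto
    define \<sigma> where "\<sigma> i = (if i < ?n then inv_into ?S f (g i) else i)" for i
    have "bij_betw (inv_into ?S f \<circ> g) ?S ?S"
      by (rule bij_betw_trans[OF bg bij_betw_inv_into[OF bf]])
    hence "bij_betw \<sigma> ?S ?S"
      by (rule bij_betw_cong[THEN iffD1, rotated]) (auto simp: \<sigma>_def)
    hence sp: "\<sigma> permutes ?S"
      by (rule bij_imp_permutes) (auto simp: \<sigma>_def)
    have fs: "f (\<sigma> j) = g j" if "j < ?n" for j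
      using that bf by (simp add: \<sigma>_def bij_betw_def f_inv_into_f)
    have sl: "\<sigma> j < ?n" if "j < ?n" for j
      using permutes_in_image[OF sp, of j] that by auto
    let ?T = "transpose_mat (subm A ?n f f)"
    have eq: "subm A ?n f g = transpose_mat (mat ?n ?n (\<lambda>(i,j). ?T $$ (\<sigma> i, j)))"
      by (rule eq_matI) (auto simp: subm_def fs sl)
    have "Determinant.det (subm A ?n f g) = Determinant.det (mat ?n ?n (\<lambda>(i,j). ?T $$ (\<sigma> i, j)))"
      unfolding eq by (rule det_transpose) auto
    also have "\<dots> = signof \<sigma> * Determinant.det ?T"
      by (rule det_permute_rows[OF _ sp]) auto
    also have "Determinant.det ?T = det A"
      using det_transpose[OF subm_carrier[of A ?n f f]] det_subm_full[OF bf, of A] by simp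
    finally have "c * Determinant.det (subm A ?n f g) = of_int (sign \<sigma>) * (c * det A)"
      by (simp add: ac_simps)
    thus ?thesis using assms by simp
  qed
qed

lemma cof_row_indep:
  assumes "\<And>i. i < t \<Longrightarrow> f i = f' i"
  shows "cofactor (subm A (Suc t) f g) t k = cofactor (subm A (Suc t) f' g) t k"
proof -
  have "mat_delete (subm A (Suc t) f g) t k = mat_delete (subm A (Suc t) f' g) t k"
    by (rule eq_matI) (auto simp: mat_delete_def subm_def assms)
  thus ?thesis by (simp add: cofactor_def)
qed

lemma cof_col_indep:
  assumes "\<And>i. i < t \<Longrightarrow> g i = g' i"
  shows "cofactor (subm A (Suc t) f g) k t = cofactor (subm A (Suc t) f g') k t"
proof -
  have "mat_delete (subm A (Suc t) f g) k t = mat_delete (subm A (Suc t) f g') k t"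
    by (rule eq_matI) (auto simp: mat_delete_def subm_def assms)
  thus ?thesis by (simp add: cofactor_def)
qed

lemma cof_tt: "cofactor (subm A (Suc t) f g) t t = Determinant.det (subm A t f g)"
proof -
  have "mat_delete (subm A (Suc t) f g) t t = subm A t f g"
    by (rule eq_matI) (auto simp: mat_delete_def subm_def)
  moreover have "(-1::'a) ^ (t + t) = 1" by (simp add: mult_2[symmetric] power_mult)
  ultimately show ?thesis by (simp add: cofactor_def)
qed

lemma inj_of_det:
  assumes "Determinant.det (subm A t f g) \<noteq> 0"
  shows "inj_on g {0..<t}" "inj_on f {0..<t}"
proof -
  show "inj_on g {0..<t}"
  proof (rule ccontr)
    assume "\<not> inj_on g {0..<t}"
    then obtain i j where ij: "i \<in> {0..<t}" "j \<in> {0..<t}" "i \<noteq> j" "g i = g j"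
      unfolding inj_on_def by blast
    have "col (subm A t f g) i = col (subm A t f g) j"
      by (rule eq_vecI) (use ij in \<open>auto simp: subm_def\<close>)
    hence "Determinant.det (subm A t f g) = 0"
      by (intro det_identical_columns[OF subm_carrier, of i j]) (use ij in auto)
    thus False using assms by simp
  qed
  show "inj_on f {0..<t}"
  proof (rule ccontr)
    assume "\<not> inj_on f {0..<t}"
    then obtain i j where ij: "i \<in> {0..<t}" "j \<in> {0..<t}" "i \<noteq> j" "f i = f j"
      unfolding inj_on_def by blast
    have "row (subm A t f g) i = row (subm A t f g) j"
      by (rule eq_vecI) (use ij in \<open>auto simp: subm_def\<close>)
    hence "Determinant.det (subm A t f g) = 0"
      by (intro det_identical_rows[OF subm_carrier, of i j]) (use ij in auto)
    thus False using assms by simp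
  qed
qed

lemma exists_outside:
  fixes g :: "nat \<Rightarrow> 'n::finite"
  assumes "t < CARD('n)"
  shows "\<exists>j. j \<notin> g ` {0..<t}"
proof -
  have "card (g ` {0..<t}) \<le> t" using card_image_le[of "{0..<t}" g] by simp
  hence "g ` {0..<t} \<noteq> UNIV" using assms by (metis card_UNIV_unit less_le_not_le)
  thus ?thesis by blast
qed

lemma row_sum:
  "(\<Sum>j\<in>UNIV. A$r$j * (\<Sum>k<Suc t. if g k = j then cofactor (subm A (Suc t) f g) t k else 0))
   = Determinant.det (subm A (Suc t) (f(t:=r)) g)"
proof -
  let ?cof = "\<lambda>k. cofactor (subm A (Suc t) f g) t k"
  have "(\<Sum>j\<in>UNIV. A$r$j * (\<Sum>k<Suc t. if g k = j then ?cof k else 0))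
      = (\<Sum>j\<in>UNIV. \<Sum>k<Suc t. if g k = j then A$r$(g k) * ?cof k else 0)"
    by (rule sum.cong[OF refl], subst sum_distrib_left, rule sum.cong[OF refl], auto)
  also have "\<dots> = (\<Sum>k<Suc t. \<Sum>j\<in>UNIV. if g k = j then A$r$(g k) * ?cof k else 0)"
    by (rule sum.swap)
  also have "\<dots> = (\<Sum>k<Suc t. A$r$(g k) * ?cof k)"
    by simp
  also have "\<dots> = (\<Sum>k<Suc t. subm A (Suc t) (f(t:=r)) g $$ (t,k) * cofactor (subm A (Suc t) (f(t:=r)) g) t k)"
    by (intro sum.cong refl, subst cof_row_indep[of t f "f(t:=r)"]) (auto simp: subm_def)
  also have "\<dots> = Determinant.det (subm A (Suc t) (f(t:=r)) g)"
    by (rule laplace_expansion_row[symmetric]) auto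
  finally show ?thesis .
qed

lemma col_sum:
  "(\<Sum>i\<in>UNIV. (\<Sum>k<Suc t. if f k = i then cofactor (subm A (Suc t) f g) k t else 0) * A$i$s)
   = Determinant.det (subm A (Suc t) f (g(t:=s)))"
proof -
  let ?cof = "\<lambda>k. cofactor (subm A (Suc t) f g) k t"
  have "(\<Sum>i\<in>UNIV. (\<Sum>k<Suc t. if f k = i then ?cof k else 0) * A$i$s)
      = (\<Sum>i\<in>UNIV. \<Sum>k<Suc t. if f k = i then A$(f k)$s * ?cof k else 0)"
    by (rule sum.cong[OF refl], subst sum_distrib_right, rule sum.cong[OF refl], auto simp: mult.commute)
  also have "\<dots> = (\<Sum>k<Suc t. \<Sum>i\<in>UNIV. if f k = i then A$(f k)$s * ?cof k else 0)"
    by (rule sum.swap)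
  also have "\<dots> = (\<Sum>k<Suc t. A$(f k)$s * ?cof k)"
    by simp
  also have "\<dots> = (\<Sum>k<Suc t. subm A (Suc t) f (g(t:=s)) $$ (k,t) * cofactor (subm A (Suc t) f (g(t:=s))) k t)"
    by (intro sum.cong refl, subst cof_col_indep[of t g "g(t:=s)"]) (auto simp: subm_def)
  also have "\<dots> = Determinant.det (subm A (Suc t) f (g(t:=s)))"
    by (rule laplace_expansion_column[symmetric]) auto
  finally show ?thesis .
qed

lemma construct:
  fixes A :: "'a::comm_ring_1^'n^'n" and d :: 'a
  assumes t: "t < CARD('n)"
    and P: "\<And>f g. d * Determinant.det (subm A (Suc t) f g) = 0"
    and nz: "d * Determinant.det (subm A t f g) * Determinant.det (subm A t f2 g2) \<noteq> 0"
  shows "\<exists>v w :: 'a^'n. (\<chi> j i. d * v$j * w$i) \<noteq> 0 \<and> A ** (\<chi> j i. d * v$j * w$i) = 0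
           \<and> (\<chi> j i. d * v$j * w$i) ** A = 0"
proof -
  obtain j0 where j0: "j0 \<notin> g ` {0..<t}" using exists_outside[OF t] by blast
  obtain i0 where i0: "i0 \<notin> f2 ` {0..<t}" using exists_outside[OF t] by blast
  define g' where "g' = g(t := j0)"
  define f2' where "f2' = f2(t := i0)"
  define v :: "'a^'n" where "v = (\<chi> j. \<Sum>k<Suc t. if g' k = j then cofactor (subm A (Suc t) f g') t k else 0)"
  define w :: "'a^'n" where "w = (\<chi> i. \<Sum>k<Suc t. if f2' k = i then cofactor (subm A (Suc t) f2' g2) k t else 0)"
  have Av: "d * (\<Sum>j\<in>UNIV. A$r$j * v$j) = 0" for r
    using row_sum[where A=A and r=r and t=t and g=g' and f=f] P by (simp add: v_def)
  have wA: "d * (\<Sum>i\<in>UNIV. w$i * A$i$s) = 0" for s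
    using col_sum[where A=A and s=s and t=t and f=f2' and g=g2] P by (simp add: w_def)
  have vj0: "v$j0 = Determinant.det (subm A t f g)"
  proof -
    have "v$j0 = (\<Sum>k<Suc t. if g' k = j0 then cofactor (subm A (Suc t) f g') t k else 0)"
      by (simp add: v_def)
    also have "\<dots> = cofactor (subm A (Suc t) f g') t t"
      by (subst sum.lessThan_Suc) (use j0 in \<open>auto simp: g'_def intro!: sum.neutral\<close>)
    also have "\<dots> = Determinant.det (subm A t f g')" by (rule cof_tt)
    also have "subm A t f g' = subm A t f g" by (rule eq_matI) (auto simp: subm_def g'_def)
    finally show ?thesis .
  qed
  have wi0: "w$i0 = Determinant.det (subm A t f2 g2)"
  proof -
    have "w$i0 = (\<Sum>k<Suc t. if f2' k = i0 then cofactor (subm A (Suc t) f2' g2) k t else 0)"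
      by (simp add: w_def)
    also have "\<dots> = cofactor (subm A (Suc t) f2' g2) t t"
      by (subst sum.lessThan_Suc) (use i0 in \<open>auto simp: f2'_def intro!: sum.neutral\<close>)
    also have "\<dots> = Determinant.det (subm A t f2' g2)" by (rule cof_tt)
    also have "subm A t f2' g2 = subm A t f2 g2" by (rule eq_matI) (auto simp: subm_def f2'_def)
    finally show ?thesis .
  qed
  let ?C = "(\<chi> j i. d * v$j * w$i) :: 'a^'n^'n"
  have "?C $ j0 $ i0 \<noteq> 0" using nz vj0 wi0 by (simp add: ac_simps)
  hence "?C \<noteq> 0" by (metis vector_component(1) zero_index)
  moreover have "A ** ?C = 0"
  proof -
    have "(A ** ?C)$r$i = w$i * (d * (\<Sum>j\<in>UNIV. A$r$j * v$j))" for r i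
      by (simp add: matrix_matrix_mult_def sum_distrib_left sum_distrib_right ac_simps)
    hence "(A ** ?C)$r$i = 0" for r i using Av by simp
    thus ?thesis by (simp add: Finite_Cartesian_Product.vec_eq_iff)
  qed
  moreover have "?C ** A = 0"
  proof -
    have "(?C ** A)$j$s = v$j * (d * (\<Sum>i\<in>UNIV. w$i * A$i$s))" for j s
      by (simp add: matrix_matrix_mult_def sum_distrib_left sum_distrib_right ac_simps)
    hence "(?C ** A)$r$i = 0" for r i using wA by simp
    thus ?thesis by (simp add: Finite_Cartesian_Product.vec_eq_iff)
  qed
  ultimately show ?thesis by blast
qed

definition Pm :: "'a::comm_ring_1^'n^'n \<Rightarrow> 'a \<Rightarrow> nat \<Rightarrow> bool" where
  "Pm A d t = (\<forall>f g. d * Determinant.det (subm A t f g) = 0)"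

lemma Pm_zero: "Pm A d 0 \<Longrightarrow> d = 0"
proof -
  assume "Pm A d 0"
  hence "d * Determinant.det (subm A 0 (\<lambda>_. undefined) (\<lambda>_. undefined)) = 0" by (simp add: Pm_def)
  moreover have "Determinant.det (subm A 0 (\<lambda>_. undefined) (\<lambda>_. undefined)) = 1"
    by (rule det_dim_zero) simp
  ultimately show "d = 0" by simp
qed

lemma Pm_mult: "Pm A d t \<Longrightarrow> Pm A (d * y) t"
  by (simp add: Pm_def ac_simps) (metis mult.assoc mult_zero_right mult.commute)

lemma Pm_dvd: "Pm A d t \<Longrightarrow> d dvd e \<Longrightarrow> Pm A e t"
  by (auto elim!: dvdE intro: Pm_mult)

lemma main_iter:
  fixes A :: "'a::comm_ring_1^'n^'n"
  assumes top: "\<And>d. c dvd d \<Longrightarrow> Pm A d CARD('n)"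
  shows "d \<noteq> 0 \<Longrightarrow> c dvd d \<Longrightarrow> \<exists>d' t f g f2 g2. c dvd d' \<and> t < CARD('n) \<and> Pm A d' (Suc t)
           \<and> d' * Determinant.det (subm A t f g) * Determinant.det (subm A t f2 g2) \<noteq> 0"
proof -
  let ?n = "CARD('n)"
  define T where "T d = Max {t. t \<le> ?n \<and> \<not> Pm A d t}" for d
  have Tprops: "T d < ?n \<and> \<not> Pm A d (T d) \<and> (\<forall>s. T d < s \<and> s \<le> ?n \<longrightarrow> Pm A d s)"
    if "d \<noteq> 0" "c dvd d" for d
  proof -
    let ?S = "{t. t \<le> ?n \<and> \<not> Pm A d t}"
    have fin: "finite ?S" by (rule finite_subset[of _ "{..?n}"]) auto
    have ne: "0 \<in> ?S" using Pm_zero that by auto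
    have inS: "T d \<in> ?S" unfolding T_def using Max_in[OF fin] ne by blast
    have mx: "\<forall>s. T d < s \<and> s \<le> ?n \<longrightarrow> Pm A d s"
    proof (intro allI impI)
      fix s assume s: "T d < s \<and> s \<le> ?n"
      show "Pm A d s"
      proof (rule ccontr)
        assume "\<not> Pm A d s"
        hence "s \<in> ?S" using s by simp
        hence "s \<le> T d" unfolding T_def by (rule Max_ge[OF fin])
        thus False using s by simp
      qed
    qed
    have "T d \<noteq> ?n" using inS top[OF that(2)] by auto
    with inS mx show ?thesis by auto
  qed
  show "d \<noteq> 0 \<Longrightarrow> c dvd d \<Longrightarrow> ?thesis"
  proof (induction "T d" arbitrary: d rule: less_induct)
    case less
    note Td = Tprops[OF less.prems]
    then obtain f g where fg: "d * Determinant.det (subm A (T d) f g) \<noteq> 0"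
      unfolding Pm_def by blast
    define d' where "d' = d * Determinant.det (subm A (T d) f g)"
    have d'0: "d' \<noteq> 0" using fg d'_def by simp
    have cd': "c dvd d'" using less.prems(2) d'_def by simp
    note Td' = Tprops[OF d'0 cd']
    have le: "T d' \<le> T d"
    proof (rule ccontr)
      assume "\<not> T d' \<le> T d"
      hence "Pm A d (T d')" using Td Td' by auto
      hence "Pm A d' (T d')" unfolding d'_def by (rule Pm_mult)
      thus False using Td' by simp
    qed
    show ?case
    proof (cases "T d' = T d")
      case True
      then obtain f2 g2 where "d' * Determinant.det (subm A (T d) f2 g2) \<noteq> 0"
        using Td' unfolding Pm_def by auto
      moreover have "Pm A d (Suc (T d))" using Td by auto
      ultimately show ?thesis using Td less.prems(2) unfolding d'_def by blast
    next
      case False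
      hence "T d' < T d" using le by simp
      from less.hyps[OF this d'0 cd'] show ?thesis .
    qed
  qed
qed

theorem corollary1:
  fixes A :: "'a::comm_ring_1 ^ 'n ^ 'n" and c :: 'a
  assumes "CARD('n) > 1"
    and "c \<noteq> 0"
    and "c * det A = 0"
  shows "\<exists>C. C \<noteq> 0 \<and> (\<exists>X :: 'a ^ 'n ^ 'n. C = (\<chi> i j. c * X $ i $ j))
            \<and> A ** C = 0 \<and> C ** A = 0"
proof -
  have Pc: "Pm A c CARD('n)" unfolding Pm_def using det_subm_top[OF assms(3)] by blast
  have topP: "\<And>d. c dvd d \<Longrightarrow> Pm A d CARD('n)" using Pm_dvd[OF Pc] .
  obtain d t f g f2 g2 where cd: "c dvd d" and t: "t < CARD('n)" and P: "Pm A d (Suc t)"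
    and nz: "d * Determinant.det (subm A t f g) * Determinant.det (subm A t f2 g2) \<noteq> 0"
    using main_iter[where A=A and c=c and d=c, OF topP assms(2) dvd_refl] by blast
  obtain v w :: "'a^'n" where vw: "(\<chi> j i. d * v$j * w$i) \<noteq> 0" "A ** (\<chi> j i. d * v$j * w$i) = 0"
    "(\<chi> j i. d * v$j * w$i) ** A = 0"
    using construct[OF t _ nz] P unfolding Pm_def by blast
  obtain x where x: "d = c * x" using cd by (auto elim: dvdE)
  have "(\<chi> j i. d * v$j * w$i) = (\<chi> i j. c * (\<chi> j i. x * v$j * w$i) $ i $ j)"
    by (simp add: x mult.assoc)
  with vw show ?thesis by metis
qed

end
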